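(* Let $x\sim P_X$, where $P_X$ satisfies (A2). Let $u:\mathbb R^d\to\mathbb R^{d_u}$ and $v:\mathbb R^d\to\mathbb R^{d_v}$ be Lipschitz functions with $\mathbb E_x[u(x)]=0$, $\mathbb E_x[v(x)]=0$, $\|u\|_{\mathrm{Lip}}=c_1$, $\|v\|_{\mathrm{Lip}}=c_2$. Let $U$ be a $d_u\times d_v$ matrix and $$\Gamma(x)=u(x)^\top Uv(x)-\mathbb E_x[u(x)^\top Uv(x)].$$ Then $\|\Gamma\|_{\psi_1}<CK^2\|U\|_F$, where $K=\sqrt{c_1^2+c_2^2}$ and $C$ is a numerical constant.
   Context: (A2) Lipschitz concentration: there is an absolute constant $c>0$ such that for every Lipschitz $\varphi:\mathbb R^d\to\mathbb R$, $\mathbb E|\varphi(x)|<\infty$ and $\mathbb P(|\varphi(x)-\mathbb E\varphi(x)|>t)\le 2e^{-ct^2/\|\varphi\|_{\mathrm{Lip}}^2}$ for all $t>0$. For a real random variable $X$, $\|X\|_{\psi_1}=\inf\{t>0:\mathbb E\exp(|X|/t)\le2\}$. *)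

theory Defs
  imports "HOL-Probability.Probability"
begin

text \<open>Vectors in R^n are represented as functions nat => real; only the
coordinates i < n matter. The carrier of R^n is the extensional function space.\<close>

definition Rn :: "nat \<Rightarrow> (nat \<Rightarrow> real) set" where
  "Rn n = PiE {..<n} (\<lambda>_. UNIV)"

definition enorm :: "nat \<Rightarrow> (nat \<Rightarrow> real) \<Rightarrow> real" where
  "enorm n x = sqrt (\<Sum>i<n. (x i)\<^sup>2)"

definition lip_consts :: "nat \<Rightarrow> nat \<Rightarrow> ((nat \<Rightarrow> real) \<Rightarrow> nat \<Rightarrow> real) \<Rightarrow> real set" where
  "lip_consts n m f = {L. 0 \<le> L \<and> (\<forall>x\<in>Rn n. \<forall>y\<in>Rn n.
      enorm m (\<lambda>i. f x i - f y i) \<le> L * enorm n (\<lambda>i. x i - y i))}"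

definition is_lip :: "nat \<Rightarrow> nat \<Rightarrow> ((nat \<Rightarrow> real) \<Rightarrow> nat \<Rightarrow> real) \<Rightarrow> bool" where
  "is_lip n m f \<longleftrightarrow> lip_consts n m f \<noteq> {}"

definition lipnorm :: "nat \<Rightarrow> nat \<Rightarrow> ((nat \<Rightarrow> real) \<Rightarrow> nat \<Rightarrow> real) \<Rightarrow> real" where
  "lipnorm n m f = Inf (lip_consts n m f)"

text \<open>Assumption (A2) with constant c for a law M on R^d.\<close>
definition lip_concentration :: "real \<Rightarrow> nat \<Rightarrow> (nat \<Rightarrow> real) measure \<Rightarrow> bool" where
  "lip_concentration c d M \<longleftrightarrow>
    (\<forall>\<phi> :: (nat \<Rightarrow> real) \<Rightarrow> real. is_lip d 1 (\<lambda>x i. \<phi> x) \<longrightarrow>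
       integrable M \<phi> \<and>
       (\<forall>t>0. measure M {x \<in> space M. \<bar>\<phi> x - (\<integral>y. \<phi> y \<partial>M)\<bar> > t}
               \<le> 2 * exp (- c * t\<^sup>2 / (lipnorm d 1 (\<lambda>x i. \<phi> x))\<^sup>2)))"

text \<open>Orlicz psi_1 norm, valued in extended reals (infinity if no t works).\<close>
definition psi1_norm :: "'a measure \<Rightarrow> ('a \<Rightarrow> real) \<Rightarrow> ereal" where
  "psi1_norm M X = Inf {ereal t | t. t > 0 \<and>
      (\<integral>\<^sup>+ x. ennreal (exp (\<bar>X x\<bar> / t)) \<partial>M) \<le> 2}"

definition frob :: "nat \<Rightarrow> nat \<Rightarrow> (nat \<Rightarrow> nat \<Rightarrow> real) \<Rightarrow> real" where
  "frob m n U = sqrt (\<Sum>i<m. \<Sum>j<n. (U i j)\<^sup>2)"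

definition bilin :: "nat \<Rightarrow> nat \<Rightarrow> (nat \<Rightarrow> nat \<Rightarrow> real) \<Rightarrow> (nat \<Rightarrow> real) \<Rightarrow> (nat \<Rightarrow> real) \<Rightarrow> real" where
  "bilin m n U a b = (\<Sum>i<m. \<Sum>j<n. a i * U i j * b j)"

end

theory Submission
  imports Defs
begin


lemma exp_step_bound:
  fixes y h l :: real
  assumes "y \<ge> 0" "h > 0" "l > 0"
  shows "ennreal (exp (l * y / h)) \<le> 1 + (\<Sum>k. ennreal ((exp (l * (real k + 1)) - exp (l * real k)) * indicator {z. z > real k * h} y))"
proof -
  define N where "N = nat \<lceil>y / h\<rceil>"
  have iff: "real k * h < y \<longleftrightarrow> k < N" for k
  proof -
    have "real k * h < y \<longleftrightarrow> real k < y / h" using assms by (simp add: pos_less_divide_eq)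
    also have "\<dots> \<longleftrightarrow> int k < \<lceil>y / h\<rceil>" by (simp add: less_ceiling_iff)
    also have "\<dots> \<longleftrightarrow> k < N" unfolding N_def by linarith
    finally show ?thesis .
  qed
  have "(\<Sum>k. ennreal ((exp (l * (real k + 1)) - exp (l * real k)) * indicator {z. z > real k * h} y))
      = (\<Sum>k<N. ennreal ((exp (l * (real k + 1)) - exp (l * real k)) * indicator {z. z > real k * h} y))"
    by (rule suminf_finite) (auto simp: iff indicator_def)
  also have "\<dots> = (\<Sum>k<N. ennreal (exp (l * real (Suc k)) - exp (l * real k)))"
    by (intro sum.cong refl) (auto simp: iff indicator_def add.commute)
  also have "\<dots> = ennreal (\<Sum>k<N. exp (l * real (Suc k)) - exp (l * real k))"
    using assms by (intro sum_ennreal) (auto)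
  also have "(\<Sum>k<N. exp (l * real (Suc k)) - exp (l * real k)) = exp (l * real N) - 1"
    using sum_lessThan_telescope[of "\<lambda>k. exp (l * real k)" N] by simp
  finally have eq: "(\<Sum>k. ennreal ((exp (l * (real k + 1)) - exp (l * real k)) * indicator {z. z > real k * h} y))
     = ennreal (exp (l * real N) - 1)" .
  have "y / h \<le> real N" unfolding N_def by linarith
  hence "l * (y / h) \<le> l * real N" using assms by (intro mult_left_mono) auto
  hence "l * y / h \<le> l * real N" by simp
  hence "exp (l * y / h) \<le> exp (l * real N)" by simp
  also have "\<dots> = 1 + (exp (l * real N) - 1)" by simp
  finally have "ennreal (exp (l * y / h)) \<le> ennreal (1 + (exp (l * real N) - 1))" by (rule ennreal_leI)
  also have "\<dots> = 1 + ennreal (exp (l * real N) - 1)"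
    using assms by (subst ennreal_plus) auto
  finally show ?thesis using eq by simp
qed

lemma geo_tail:
  fixes Y :: "'a \<Rightarrow> real"
  assumes P: "prob_space M" and Ym: "Y \<in> borel_measurable M" and Y0: "\<forall>x\<in>space M. 0 \<le> Y x"
    and h: "h > 0" and q: "0 \<le> q" and l: "l > 0" and lq: "exp l * q < 1"
    and tail: "\<forall>k::nat. measure M {x\<in>space M. Y x > real k * h} \<le> A * q^k"
  shows "(\<integral>\<^sup>+x. ennreal (exp (l * Y x / h)) \<partial>M) \<le> ennreal (1 + A * (exp l - 1) / (1 - exp l * q))"
proof -
  interpret prob_space M by (rule P)
  have A0: "A \<ge> 0" using tail[rule_format, of 0] by (metis measure_nonneg order_trans power_0 mult_1_right)
  define D where "D k = exp (l * (real k + 1)) - exp (l * real k)" for k :: nat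
  have D0: "D k \<ge> 0" for k using l by (simp add: D_def)
  have Deq: "D k = (exp l - 1) * exp l ^ k" for k
    by (simp add: D_def exp_add algebra_simps flip: exp_of_nat_mult)
  define S where "S k = {x\<in>space M. Y x > real k * h}" for k
  have Ssets: "S k \<in> sets M" for k unfolding S_def using Ym by measurable
  have "(\<integral>\<^sup>+x. ennreal (exp (l * Y x / h)) \<partial>M)
     \<le> (\<integral>\<^sup>+x. 1 + (\<Sum>k. ennreal (D k) * indicator (S k) x) \<partial>M)"
  proof (rule nn_integral_mono)
    fix x assume x: "x \<in> space M"
    have "ennreal (exp (l * Y x / h)) \<le> 1 + (\<Sum>k. ennreal (D k * indicator {z. z > real k * h} (Y x)))"
      unfolding D_def using Y0 x h l by (intro exp_step_bound) auto
    also have "(\<lambda>k. ennreal (D k * indicator {z. z > real k * h} (Y x))) = (\<lambda>k. ennreal (D k) * indicator (S k) x)"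
      by (intro ext) (simp add: S_def indicator_def x)
    finally show "ennreal (exp (l * Y x / h)) \<le> 1 + (\<Sum>k. ennreal (D k) * indicator (S k) x)" .
  qed
  also have "\<dots> = (\<integral>\<^sup>+x. 1 \<partial>M) + (\<integral>\<^sup>+x. (\<Sum>k. ennreal (D k) * indicator (S k) x) \<partial>M)"
    using Ssets by (intro nn_integral_add) auto
  also have "(\<integral>\<^sup>+x. (\<Sum>k. ennreal (D k) * indicator (S k) x) \<partial>M) = (\<Sum>k. (\<integral>\<^sup>+x. ennreal (D k) * indicator (S k) x \<partial>M))"
    using Ssets by (intro nn_integral_suminf) auto
  also have "\<dots> = (\<Sum>k. ennreal (D k) * emeasure M (S k))"
    using Ssets by (simp add: nn_integral_cmult_indicator)
  also have "\<dots> \<le> (\<Sum>k. ennreal (A * (exp l - 1) * (exp l * q) ^ k))"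
  proof (rule suminf_le[OF _ summableI summableI])
    fix k
    have eq: "ennreal (D k) * emeasure M (S k) = ennreal (D k * measure M (S k))"
      using D0 by (simp add: emeasure_eq_measure ennreal_mult)
    have "D k * measure M (S k) \<le> D k * (A * q ^ k)"
      using tail D0 by (intro mult_left_mono) (auto simp: S_def)
    also have "D k * (A * q ^ k) = A * (exp l - 1) * (exp l * q) ^ k"
      by (simp add: Deq power_mult_distrib)
    finally show "ennreal (D k) * emeasure M (S k) \<le> ennreal (A * (exp l - 1) * (exp l * q) ^ k)"
      unfolding eq by (rule ennreal_leI)
  qed
  also have "\<dots> = ennreal (\<Sum>k. A * (exp l - 1) * (exp l * q) ^ k)"
  proof (rule suminf_ennreal2)
    show "0 \<le> A * (exp l - 1) * (exp l * q) ^ k" for k using A0 l q by simp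
    show "summable (\<lambda>k. A * (exp l - 1) * (exp l * q) ^ k)"
      using lq q by (intro summable_mult summable_geometric) simp
  qed
  also have "(\<Sum>k. A * (exp l - 1) * (exp l * q) ^ k) = A * (exp l - 1) / (1 - exp l * q)"
    using lq q by (subst suminf_mult) (auto simp: suminf_geometric)
  finally have fin: "(\<integral>\<^sup>+x. ennreal (exp (l * Y x / h)) \<partial>M) \<le> 1 + ennreal (A * (exp l - 1) / (1 - exp l * q))"
    by (simp add: emeasure_space_1)
  have nn: "0 \<le> A * (exp l - 1) / (1 - exp l * q)" using A0 l lq by simp
  have "ennreal (1 + A * (exp l - 1) / (1 - exp l * q)) = 1 + ennreal (A * (exp l - 1) / (1 - exp l * q))"
    using nn by (subst ennreal_plus) auto
  then show ?thesis using fin by simp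
qed



lemma small_lambda:
  fixes A q eta :: real
  assumes "A \<ge> 0" "0 \<le> q" "q < 1" "eta > 0"
  shows "\<exists>b>0. \<forall>l. 0 < l \<and> l < b \<longrightarrow> exp l * q < 1 \<and> A * (exp l - 1) / (1 - exp l * q) \<le> eta"
proof -
  have t1: "((\<lambda>l. exp l * q) \<longlongrightarrow> exp 0 * q) (at_right 0)"
    by (intro tendsto_intros)
  have t2: "((\<lambda>l. A * (exp l - 1) / (1 - exp l * q)) \<longlongrightarrow> A * (exp 0 - 1) / (1 - exp 0 * q)) (at_right 0)"
    using assms by (intro tendsto_intros) auto
  have e1: "eventually (\<lambda>l. exp l * q < 1) (at_right 0)"
    using order_tendstoD(2)[OF t1] assms by simp
  have e2: "eventually (\<lambda>l. A * (exp l - 1) / (1 - exp l * q) < eta) (at_right 0)"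
    using order_tendstoD(2)[OF t2] assms by simp
  have "eventually (\<lambda>l. exp l * q < 1 \<and> A * (exp l - 1) / (1 - exp l * q) \<le> eta) (at_right (0::real))"
    using eventually_conj[OF e1 e2] by (rule eventually_mono) auto
  then show ?thesis unfolding eventually_at_right_field by auto
qed

lemma exp_moment:
  fixes Y :: "'a \<Rightarrow> real"
  assumes P: "prob_space M" and Ym: "Y \<in> borel_measurable M" and Y0: "\<forall>x\<in>space M. 0 \<le> Y x"
    and h: "h > 0" and l: "l > 0"
    and nn: "(\<integral>\<^sup>+x. ennreal (exp (l * Y x / h)) \<partial>M) \<le> ennreal B"
  shows "integrable M (\<lambda>x. exp (l * Y x / h))" "(\<integral>x. exp (l * Y x / h) \<partial>M) \<le> B"
    "integrable M Y" "(\<integral>x. Y x \<partial>M) \<le> h / l * (B - 1)"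
    "integrable M (\<lambda>x. (Y x)\<^sup>2)" "(\<integral>x. (Y x)\<^sup>2 \<partial>M) \<le> 2 * h\<^sup>2 / l\<^sup>2 * B"
proof -
  interpret prob_space M by (rule P)
  have Em: "(\<lambda>x. exp (l * Y x / h)) \<in> borel_measurable M" using Ym by measurable
  show I: "integrable M (\<lambda>x. exp (l * Y x / h))"
  proof (rule integrableI_bounded)
    show "(\<lambda>x. exp (l * Y x / h)) \<in> borel_measurable M" by (rule Em)
    have "(\<integral>\<^sup>+x. ennreal (norm (exp (l * Y x / h))) \<partial>M) = (\<integral>\<^sup>+x. ennreal (exp (l * Y x / h)) \<partial>M)"
      by simp
    also have "\<dots> < \<infinity>" using nn by (simp add: le_less_trans)
    finally show "(\<integral>\<^sup>+x. ennreal (norm (exp (l * Y x / h))) \<partial>M) < \<infinity>" .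
  qed
  have "(\<integral>x. exp (l * Y x / h) \<partial>M) = enn2real (\<integral>\<^sup>+x. ennreal (exp (l * Y x / h)) \<partial>M)"
    using Em by (intro integral_eq_nn_integral) auto
  also have "\<dots> \<le> max 0 B"
    using nn by (intro enn2real_leI) (auto simp: max_def ennreal_neg)
  finally have EB0: "(\<integral>x. exp (l * Y x / h) \<partial>M) \<le> max 0 B" .
  have "(\<integral>x. exp (l * Y x / h) \<partial>M) \<ge> 1"
  proof -
    have "(\<integral>x. 1 \<partial>M) \<le> (\<integral>x. exp (l * Y x / h) \<partial>M)"
      using I Y0 h l by (intro integral_mono) (auto intro: one_le_exp_iff[THEN iffD2])
    moreover have "(\<integral>x. 1 \<partial>M) = (1::real)" using prob_space by (simp only: lebesgue_integral_const) simp
    ultimately show ?thesis by linarith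
  qed
  then show EB: "(\<integral>x. exp (l * Y x / h) \<partial>M) \<le> B" using EB0 by linarith
  have bY: "Y x \<le> h / l * exp (l * Y x / h)" for x
  proof -
    have "l * Y x / h \<le> exp (l * Y x / h)" using exp_ge_add_one_self[of "l * Y x / h"] by linarith
    then have "h / l * (l * Y x / h) \<le> h / l * exp (l * Y x / h)" using h l by (intro mult_left_mono) auto
    then show ?thesis using h l by simp
  qed
  show IY: "integrable M Y"
    using Bochner_Integration.integrable_bound[OF integrable_mult_right[OF I, of "h / l"] Ym] Y0 bY h l
    by (auto intro!: AE_I2 simp: abs_of_nonneg)
  have "(\<integral>x. Y x \<partial>M) \<le> (\<integral>x. h / l * exp (l * Y x / h) - h / l \<partial>M)"
  proof (rule integral_mono)
    show "integrable M (\<lambda>x. h / l * exp (l * Y x / h) - h / l)" using I by auto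
    fix x
    have "1 + l * Y x / h \<le> exp (l * Y x / h)" by (rule exp_ge_add_one_self)
    then have "h / l * (1 + l * Y x / h) \<le> h / l * exp (l * Y x / h)" using h l by (intro mult_left_mono) auto
    moreover have "h / l * (1 + l * Y x / h) = h / l + Y x" using h l by (simp add: field_simps)
    ultimately show "Y x \<le> h / l * exp (l * Y x / h) - h / l" by linarith
  qed (rule IY)
  also have "\<dots> = h / l * (\<integral>x. exp (l * Y x / h) \<partial>M) - h / l"
    using I by (simp add: prob_space)
  also have "\<dots> \<le> h / l * B - h / l" using mult_left_mono[OF EB, of "h / l"] h l by simp
  finally show "(\<integral>x. Y x \<partial>M) \<le> h / l * (B - 1)" by (simp add: right_diff_distrib)
  have bY2: "(Y x)\<^sup>2 \<le> 2 * h\<^sup>2 / l\<^sup>2 * exp (l * Y x / h)" if "x \<in> space M" for x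
  proof -
    have z: "0 \<le> l * Y x / h" using Y0 that h l by simp
    have "(l * Y x / h)\<^sup>2 / 2 \<le> exp (l * Y x / h)"
      using exp_lower_Taylor_quadratic[OF z] z by linarith
    then have "2 * h\<^sup>2 / l\<^sup>2 * ((l * Y x / h)\<^sup>2 / 2) \<le> 2 * h\<^sup>2 / l\<^sup>2 * exp (l * Y x / h)"
      by (intro mult_left_mono) auto
    then show ?thesis using h l by (simp add: field_simps power2_eq_square)
  qed
  show IY2: "integrable M (\<lambda>x. (Y x)\<^sup>2)"
    using Bochner_Integration.integrable_bound[OF integrable_mult_right[OF I, of "2 * h\<^sup>2 / l\<^sup>2"], of "\<lambda>x. (Y x)\<^sup>2"] Ym bY2
    by (auto intro!: AE_I2)
  have "(\<integral>x. (Y x)\<^sup>2 \<partial>M) \<le> (\<integral>x. 2 * h\<^sup>2 / l\<^sup>2 * exp (l * Y x / h) \<partial>M)"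
    using IY2 I bY2 by (intro integral_mono_AE) (auto intro!: AE_I2)
  also have "\<dots> = 2 * h\<^sup>2 / l\<^sup>2 * (\<integral>x. exp (l * Y x / h) \<partial>M)" by simp
  also have "\<dots> \<le> 2 * h\<^sup>2 / l\<^sup>2 * B" using EB by (intro mult_left_mono) auto
  finally show "(\<integral>x. (Y x)\<^sup>2 \<partial>M) \<le> 2 * h\<^sup>2 / l\<^sup>2 * B" .
qed



definition ed :: "nat \<Rightarrow> (nat \<Rightarrow> real) \<Rightarrow> (nat \<Rightarrow> real) \<Rightarrow> real" where
  "ed d x y = enorm d (\<lambda>i. x i - y i)"

definition lipon :: "nat \<Rightarrow> real \<Rightarrow> ((nat \<Rightarrow> real) \<Rightarrow> real) \<Rightarrow> bool" where
  "lipon d L \<phi> \<longleftrightarrow> L \<ge> 0 \<and> (\<forall>x\<in>Rn d. \<forall>y\<in>Rn d. \<bar>\<phi> x - \<phi> y\<bar> \<le> L * ed d x y)"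

lemma enorm_L2: "enorm n x = L2_set x {..<n}"
  by (simp add: enorm_def L2_set_def)

lemma enorm_nonneg: "enorm n x \<ge> 0"
  by (simp add: enorm_L2)

lemma enorm_triangle: "enorm n (\<lambda>i. x i + y i) \<le> enorm n x + enorm n y"
  unfolding enorm_L2 by (rule L2_set_triangle_ineq)

lemma enorm_cs: "\<bar>\<Sum>i<n. a i * b i\<bar> \<le> enorm n a * enorm n b"
proof -
  have "\<bar>\<Sum>i<n. a i * b i\<bar> \<le> (\<Sum>i<n. \<bar>a i\<bar> * \<bar>b i\<bar>)"
    by (rule order_trans[OF sum_abs]) (simp add: abs_mult)
  also have "\<dots> \<le> enorm n a * enorm n b" unfolding enorm_L2 by (rule L2_set_mult_ineq)
  finally show ?thesis .
qed

lemma enorm_minus: "enorm n (\<lambda>i. - x i) = enorm n x"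
  by (simp add: enorm_def)

lemma enorm_scale: "enorm n (\<lambda>i. a * x i) = \<bar>a\<bar> * enorm n x"
  by (simp add: enorm_def power_mult_distrib sum_distrib_left[symmetric] real_sqrt_mult)

lemma enorm_mat: "enorm m (\<lambda>i. \<Sum>j<n. U i j * w j) \<le> frob m n U * enorm n w"
proof -
  have "(\<Sum>i<m. (\<Sum>j<n. U i j * w j)\<^sup>2) \<le> (\<Sum>i<m. (\<Sum>j<n. (U i j)\<^sup>2) * (\<Sum>j<n. (w j)\<^sup>2))"
    by (intro sum_mono Cauchy_Schwarz_ineq_sum)
  also have "\<dots> = (\<Sum>i<m. \<Sum>j<n. (U i j)\<^sup>2) * (\<Sum>j<n. (w j)\<^sup>2)"
    by (simp add: sum_distrib_right)
  finally have "sqrt (\<Sum>i<m. (\<Sum>j<n. U i j * w j)\<^sup>2) \<le> sqrt ((\<Sum>i<m. \<Sum>j<n. (U i j)\<^sup>2) * (\<Sum>j<n. (w j)\<^sup>2))"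
    by (rule real_sqrt_le_mono)
  then show ?thesis by (simp add: enorm_def frob_def real_sqrt_mult)
qed

lemma frob_nonneg: "frob m n U \<ge> 0"
  by (simp add: frob_def sum_nonneg)

lemma ed_nonneg: "ed d x y \<ge> 0" by (simp add: ed_def enorm_nonneg)

lemma ed_sym: "ed d x y = ed d y x"
  unfolding ed_def enorm_def by (simp add: power2_commute)

lemma ed_self: "ed d x x = 0" by (simp add: ed_def enorm_def)

lemma ed_triangle: "ed d x z \<le> ed d x y + ed d y z"
proof -
  have "ed d x z = enorm d (\<lambda>i. (x i - y i) + (y i - z i))" by (simp add: ed_def)
  also have "\<dots> \<le> ed d x y + ed d y z" unfolding ed_def by (rule enorm_triangle)
  finally show ?thesis .
qed

lemma enorm_1: "enorm (Suc 0) (\<lambda>i. a) = \<bar>a\<bar>"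
  by (simp add: enorm_def)

lemma lipon_lip_consts: "lipon d L \<phi> \<Longrightarrow> L \<in> lip_consts d 1 (\<lambda>x i. \<phi> x)"
  by (simp add: lipon_def lip_consts_def enorm_1 ed_def)

lemma lipon_is_lip: "lipon d L \<phi> \<Longrightarrow> is_lip d 1 (\<lambda>x i. \<phi> x)"
  using lipon_lip_consts unfolding is_lip_def by blast

lemma lip_consts_bdd: "bdd_below (lip_consts n m f)"
  unfolding lip_consts_def by (rule bdd_belowI[of _ 0]) auto

lemma lipnorm_le: "lipon d L \<phi> \<Longrightarrow> lipnorm d 1 (\<lambda>x i. \<phi> x) \<le> L"
  unfolding lipnorm_def using lipon_lip_consts lip_consts_bdd by (intro cInf_lower) auto

lemma lipnorm_nonneg: "is_lip n m f \<Longrightarrow> lipnorm n m f \<ge> 0"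
  unfolding lipnorm_def is_lip_def lip_consts_def by (intro cInf_greatest) auto

lemma lipnorm_zero_const:
  assumes "is_lip d 1 (\<lambda>x i. \<phi> x)" "lipnorm d 1 (\<lambda>x i. \<phi> x) = 0" "x \<in> Rn d" "y \<in> Rn d"
  shows "\<phi> x = \<phi> y"
proof -
  have H: "\<bar>\<phi> x - \<phi> y\<bar> \<le> e" if e: "e > 0" for e
  proof -
    define D where "D = ed d x y + 1"
    have D: "D > 0" using ed_nonneg[of d x y] by (simp add: D_def)
    have "Inf (lip_consts d 1 (\<lambda>x i. \<phi> x)) < e / D" using assms(2) e D by (simp add: lipnorm_def)
    then obtain L where L: "L \<in> lip_consts d 1 (\<lambda>x i. \<phi> x)" "L < e / D"
      using assms(1) unfolding is_lip_def by (meson cInf_lessD)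
    then have L0: "L \<ge> 0" by (simp add: lip_consts_def)
    have "\<bar>\<phi> x - \<phi> y\<bar> \<le> L * ed d x y"
      using assms(3,4) L by (auto simp: lip_consts_def enorm_1 ed_def)
    also have "L * ed d x y \<le> e / D * D" using L D ed_nonneg[of d x y] L0
      by (intro mult_mono) (auto simp: D_def)
    also have "\<dots> = e" using D by simp
    finally show ?thesis .
  qed
  have "\<bar>\<phi> x - \<phi> y\<bar> \<le> 0" by (rule field_le_epsilon) (simp add: H)
  then show ?thesis by simp
qed

lemma conc:
  assumes P: "prob_space M" and S: "space M = Rn d" and LC: "lip_concentration c d M" and c: "c > 0"
    and lip: "lipon d L \<phi>" and L: "L > 0"
  shows "integrable M \<phi>"
    "\<And>t. t > 0 \<Longrightarrow> measure M {x\<in>space M. \<bar>\<phi> x - (\<integral>y. \<phi> y \<partial>M)\<bar> > t} \<le> 2 * exp (- c * t\<^sup>2 / L\<^sup>2)"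
proof -
  interpret prob_space M by (rule P)
  have il: "is_lip d 1 (\<lambda>x i. \<phi> x)" using lip by (rule lipon_is_lip)
  note LC' = LC[unfolded lip_concentration_def, rule_format, OF il]
  show "integrable M \<phi>" using LC' by blast
  fix t :: real assume t: "t > 0"
  define l where "l = lipnorm d 1 (\<lambda>x i. \<phi> x)"
  have l0: "l \<ge> 0" using lipnorm_nonneg[OF il] by (simp add: l_def)
  have lL: "l \<le> L" using lipnorm_le[OF lip] by (simp add: l_def)
  show "measure M {x\<in>space M. \<bar>\<phi> x - (\<integral>y. \<phi> y \<partial>M)\<bar> > t} \<le> 2 * exp (- c * t\<^sup>2 / L\<^sup>2)"
  proof (cases "l = 0")
    case False
    then have lp: "l > 0" using l0 by simp
    have "measure M {x\<in>space M. \<bar>\<phi> x - (\<integral>y. \<phi> y \<partial>M)\<bar> > t} \<le> 2 * exp (- c * t\<^sup>2 / l\<^sup>2)"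
      using LC' t by (simp add: l_def)
    also have "\<dots> \<le> 2 * exp (- c * t\<^sup>2 / L\<^sup>2)"
    proof -
      have "c * t\<^sup>2 / L\<^sup>2 \<le> c * t\<^sup>2 / l\<^sup>2"
        using lp lL c t by (intro divide_left_mono power_mono mult_pos_pos) auto
      then show ?thesis by simp
    qed
    finally show ?thesis .
  next
    case True
    show ?thesis
    proof (cases "space M = {}")
      case True then show ?thesis by simp
    next
      case False
      then obtain x0 where x0: "x0 \<in> space M" by blast
      have const: "\<phi> x = \<phi> x0" if "x \<in> space M" for x
        using lipnorm_zero_const[OF il True[unfolded l_def], of x x0] that x0 S by simp
      have "(\<integral>y. \<phi> y \<partial>M) = (\<integral>y. \<phi> x0 \<partial>M)" by (rule Bochner_Integration.integral_cong) (auto simp: const)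
      also have "\<dots> = \<phi> x0" by (simp add: prob_space)
      finally have "{x\<in>space M. \<bar>\<phi> x - (\<integral>y. \<phi> y \<partial>M)\<bar> > t} = {}" using const t by auto
      then show ?thesis by (metis measure_empty exp_ge_zero mult_nonneg_nonneg zero_le_numeral)
    qed
  qed
qed



lemma subgauss_geo:
  assumes P: "prob_space M" and S: "space M = Rn d" and LC: "lip_concentration c d M" and c: "c > 0"
    and lip: "lipon d L \<phi>" and L: "L > 0"
  shows "measure M {x\<in>space M. \<bar>\<phi> x - (\<integral>y. \<phi> y \<partial>M)\<bar> > real k * L} \<le> 2 * exp (- c) ^ k"
proof (cases "k = 0")
  case True
  interpret prob_space M by (rule P)
  show ?thesis using True prob_le_1 by (simp add: order_trans[OF prob_le_1])
next
  case False
  then have kL: "real k * L > 0" using L by simp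
  have "measure M {x\<in>space M. \<bar>\<phi> x - (\<integral>y. \<phi> y \<partial>M)\<bar> > real k * L} \<le> 2 * exp (- c * (real k * L)\<^sup>2 / L\<^sup>2)"
    by (rule conc(2)[OF P S LC c lip L kL])
  also have "- c * (real k * L)\<^sup>2 / L\<^sup>2 = - c * (real k)\<^sup>2" using L by (simp add: power_mult_distrib)
  also have "exp (- c * (real k)\<^sup>2) \<le> exp (- c * real k)"
  proof -
    have "real k \<le> (real k)\<^sup>2" using False by (simp add: power2_eq_square)
    then show ?thesis using c by simp
  qed
  also have "exp (- c * real k) = exp (- c) ^ k" by (simp add: exp_of_nat_mult[symmetric] mult.commute)
  finally show ?thesis by simp
qed

lemma lipon_zero_const: "lipon d 0 \<phi> \<Longrightarrow> x \<in> Rn d \<Longrightarrow> y \<in> Rn d \<Longrightarrow> \<phi> x = \<phi> y"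
proof -
  assume a: "lipon d 0 \<phi>" "x \<in> Rn d" "y \<in> Rn d"
  then have "\<bar>\<phi> x - \<phi> y\<bar> \<le> 0 * ed d x y" unfolding lipon_def by blast
  then show "\<phi> x = \<phi> y" by simp
qed

lemma var_bound:
  assumes c: "c > 0"
  shows "\<exists>D2>0. \<forall>M d L \<phi>. prob_space M \<and> space M = Rn d \<and> lip_concentration c d M \<and> lipon d L \<phi>
     \<and> (\<integral>y. \<phi> y \<partial>M) = 0 \<longrightarrow> integrable M (\<lambda>x. (\<phi> x)\<^sup>2) \<and> (\<integral>x. (\<phi> x)\<^sup>2 \<partial>M) \<le> D2 * L\<^sup>2"
proof -
  have q: "0 \<le> exp (- c)" "exp (- c) < 1" using c by auto
  obtain b where b: "b > 0" "\<forall>l. 0 < l \<and> l < b \<longrightarrow> exp l * exp (- c) < 1 \<and> 2 * (exp l - 1) / (1 - exp l * exp (- c)) \<le> 1"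
    using small_lambda[of 2 "exp (- c)" 1] q by auto
  define l where "l = b / 2"
  have l: "l > 0" "exp l * exp (- c) < 1" "2 * (exp l - 1) / (1 - exp l * exp (- c)) \<le> 1"
    using b(1) b(2)[rule_format, of l] by (auto simp: l_def)
  show ?thesis
  proof (intro exI[of _ "4 / l\<^sup>2"] conjI allI impI)
    show "4 / l\<^sup>2 > 0" using l by simp
    fix M d L \<phi>
    assume H: "prob_space M \<and> space M = Rn d \<and> lip_concentration c d M \<and> lipon d L \<phi> \<and> (\<integral>y. \<phi> y \<partial>M) = 0"
    then have P: "prob_space M" and S: "space M = Rn d" and LC: "lip_concentration c d M"
      and lip: "lipon d L \<phi>" and E0: "(\<integral>y. \<phi> y \<partial>M) = 0" by auto
    interpret prob_space M by (rule P)
    have "(integrable M (\<lambda>x. (\<phi> x)\<^sup>2) \<and> (\<integral>x. (\<phi> x)\<^sup>2 \<partial>M) \<le> 4 / l\<^sup>2 * L\<^sup>2)"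
    proof (cases "L = 0")
      case True
      show ?thesis
      proof (cases "space M = {}")
        case True
        then show ?thesis using not_empty by simp
      next
        case False
        then obtain x0 where x0: "x0 \<in> space M" by blast
        have const: "\<phi> x = \<phi> x0" if "x \<in> space M" for x
          using lipon_zero_const[of d \<phi> x x0] lip True that x0 S by simp
        have "(\<integral>y. \<phi> y \<partial>M) = (\<integral>y. \<phi> x0 \<partial>M)" by (rule Bochner_Integration.integral_cong) (auto simp: const)
        also have "\<dots> = \<phi> x0" by (simp add: prob_space)
        finally have z: "\<phi> x = 0" if "x \<in> space M" for x using E0 const that by simp
        have "integrable M (\<lambda>x. (\<phi> x)\<^sup>2) \<longleftrightarrow> integrable M (\<lambda>x. 0::real)"
          by (rule Bochner_Integration.integrable_cong) (auto simp: z)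
        moreover have "(\<integral>x. (\<phi> x)\<^sup>2 \<partial>M) = (\<integral>x. 0 \<partial>M)"
          by (rule Bochner_Integration.integral_cong) (auto simp: z)
        ultimately show ?thesis using True by simp
      qed
    next
      case False
      then have L: "L > 0" using lip by (simp add: lipon_def)
      have Im: "\<phi> \<in> borel_measurable M" using conc(1)[OF P S LC c lip L] by auto
      have Ym: "(\<lambda>x. \<bar>\<phi> x\<bar>) \<in> borel_measurable M" using Im by measurable
      have tail: "\<forall>k::nat. measure M {x\<in>space M. \<bar>\<phi> x\<bar> > real k * L} \<le> 2 * exp (- c) ^ k"
        using subgauss_geo[OF P S LC c lip L] E0 by simp
      have "(\<integral>\<^sup>+x. ennreal (exp (l * \<bar>\<phi> x\<bar> / L)) \<partial>M) \<le> ennreal (1 + 2 * (exp l - 1) / (1 - exp l * exp (- c)))"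
        by (rule geo_tail[OF P Ym _ L q(1) l(1) l(2) tail]) auto
      also have "\<dots> \<le> ennreal 2" using l(3) by (intro ennreal_leI) auto
      finally have nn: "(\<integral>\<^sup>+x. ennreal (exp (l * \<bar>\<phi> x\<bar> / L)) \<partial>M) \<le> ennreal 2" .
      note em = exp_moment[OF P Ym _ L l(1) nn]
      have "integrable M (\<lambda>x. (\<phi> x)\<^sup>2)" using em(5) by simp
      moreover have "(\<integral>x. (\<phi> x)\<^sup>2 \<partial>M) \<le> 4 / l\<^sup>2 * L\<^sup>2" using em(6) by simp
      ultimately show ?thesis by simp
    qed
    then show "integrable M (\<lambda>x. (\<phi> x)\<^sup>2)" "(\<integral>x. (\<phi> x)\<^sup>2 \<partial>M) \<le> 4 / l\<^sup>2 * L\<^sup>2" by auto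
  qed
qed



lemma mcshane:
  fixes f :: "(nat \<Rightarrow> real) \<Rightarrow> real"
  assumes a0: "a0 \<in> A" and L: "L \<ge> 0" and lip: "\<forall>x\<in>A. \<forall>y\<in>A. \<bar>f x - f y\<bar> \<le> L * ed d x y"
  shows "\<forall>x\<in>A. Inf ((\<lambda>y. f y + L * ed d x y) ` A) = f x"
    "lipon d L (\<lambda>x. Inf ((\<lambda>y. f y + L * ed d x y) ` A))"
proof -
  define F where "F x = Inf ((\<lambda>y. f y + L * ed d x y) ` A)" for x
  have ne: "(\<lambda>y. f y + L * ed d x y) ` A \<noteq> {}" for x using a0 by blast
  have bdd: "bdd_below ((\<lambda>y. f y + L * ed d x y) ` A)" for x
  proof (rule bdd_belowI2)
    fix y assume y: "y \<in> A"
    have "f a0 - f y \<le> L * ed d a0 y" using lip a0 y by fastforce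
    moreover have "ed d a0 y \<le> ed d a0 x + ed d x y" by (rule ed_triangle)
    moreover have "ed d a0 x = ed d x a0" by (rule ed_sym)
    ultimately have "f a0 - f y \<le> L * ed d x a0 + L * ed d x y"
      using mult_left_mono[OF _ L, of "ed d a0 y" "ed d a0 x + ed d x y"] by (simp add: distrib_left)
    then show "f a0 - L * ed d x a0 \<le> f y + L * ed d x y" by linarith
  qed
  have low: "F x \<le> f y + L * ed d x y" if "y \<in> A" for x y
    unfolding F_def using bdd that by (intro cInf_lower) auto
  have great: "c \<le> F x" if "\<And>y. y \<in> A \<Longrightarrow> c \<le> f y + L * ed d x y" for x c
    unfolding F_def using ne that by (intro cInf_greatest) auto
  show "\<forall>x\<in>A. Inf ((\<lambda>y. f y + L * ed d x y) ` A) = f x"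
  proof
    fix x assume x: "x \<in> A"
    have "F x \<le> f x" using low[OF x, of x] by (simp add: ed_self)
    moreover have "f x \<le> F x"
    proof (rule great)
      fix y assume y: "y \<in> A"
      have "f x - f y \<le> L * ed d x y" using lip x y by fastforce
      then show "f x \<le> f y + L * ed d x y" by linarith
    qed
    ultimately show "Inf ((\<lambda>y. f y + L * ed d x y) ` A) = f x" unfolding F_def by simp
  qed
  have one: "F x \<le> F z + L * ed d x z" for x z
  proof -
    have "F x - L * ed d x z \<le> F z"
    proof (rule great)
      fix y assume y: "y \<in> A"
      have a: "F x \<le> f y + L * ed d x y" by (rule low[OF y])
      have t: "ed d x y \<le> ed d x z + ed d z y" by (rule ed_triangle)
      have "L * ed d x y \<le> L * (ed d x z + ed d z y)" by (rule mult_left_mono[OF t L])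
      then show "F x - L * ed d x z \<le> f y + L * ed d z y" using a by (simp add: distrib_left)
    qed
    then show ?thesis by simp
  qed
  show "lipon d L (\<lambda>x. Inf ((\<lambda>y. f y + L * ed d x y) ` A))"
    unfolding lipon_def
  proof (intro conjI L ballI)
    fix x z
    have "F x - F z \<le> L * ed d x z" using one[of x z] by simp
    moreover have "F z - F x \<le> L * ed d x z" using one[of z x] by (simp add: ed_sym)
    ultimately show "\<bar>Inf ((\<lambda>y. f y + L * ed d x y) ` A) - Inf ((\<lambda>y. f y + L * ed d z y) ` A)\<bar> \<le> L * ed d x z"
      unfolding F_def by linarith
  qed
qed



definition mv :: "nat \<Rightarrow> (nat \<Rightarrow> nat \<Rightarrow> real) \<Rightarrow> (nat \<Rightarrow> real) \<Rightarrow> nat \<Rightarrow> real" where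
  "mv n U w i = (\<Sum>j<n. U i j * w j)"

definition tr :: "(nat \<Rightarrow> nat \<Rightarrow> real) \<Rightarrow> nat \<Rightarrow> nat \<Rightarrow> real" where
  "tr U j i = U i j"

lemma enorm_coord: "i < n \<Longrightarrow> \<bar>w i\<bar> \<le> enorm n w"
proof -
  assume i: "i < n"
  have "(w i)\<^sup>2 \<le> (\<Sum>k<n. (w k)\<^sup>2)"
    using i by (intro member_le_sum) auto
  then have "sqrt ((w i)\<^sup>2) \<le> enorm n w" unfolding enorm_def by (rule real_sqrt_le_mono)
  then show ?thesis by simp
qed

lemma enorm_rev: "\<bar>enorm n a - enorm n b\<bar> \<le> enorm n (\<lambda>i. a i - b i)"
proof -
  have 1: "enorm n a \<le> enorm n (\<lambda>i. a i - b i) + enorm n b"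
    using enorm_triangle[of n "\<lambda>i. a i - b i" b] by simp
  have 2: "enorm n b \<le> enorm n (\<lambda>i. b i - a i) + enorm n a"
    using enorm_triangle[of n "\<lambda>i. b i - a i" a] by simp
  have "enorm n (\<lambda>i. b i - a i) = enorm n (\<lambda>i. a i - b i)"
    using enorm_minus[of n "\<lambda>i. a i - b i"] by simp
  then show ?thesis using 1 2 by linarith
qed

lemma frob_tr: "frob n m (tr U) = frob m n U"
  unfolding frob_def tr_def by (subst sum.swap) simp

lemma mv_diff: "mv n U a i - mv n U b i = mv n U (\<lambda>j. a j - b j) i"
  by (simp add: mv_def sum_subtractf[symmetric] algebra_simps)

lemma bilin_mv: "bilin m n U a b = (\<Sum>i<m. a i * mv n U b i)"
  by (simp add: bilin_def mv_def sum_distrib_left mult.assoc)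

lemma bilin_tr: "bilin m n U a b = (\<Sum>j<n. mv m (tr U) a j * b j)"
  unfolding bilin_def mv_def tr_def
  by (subst sum.swap) (simp add: sum_distrib_left sum_distrib_right mult_ac)

lemma bilin_diff:
  "bilin m n U a b - bilin m n U a' b' =
     (\<Sum>i<m. (a i - a' i) * mv n U b i) + (\<Sum>j<n. mv m (tr U) a' j * (b j - b' j))"
proof -
  have "bilin m n U a b - bilin m n U a' b' = (bilin m n U a b - bilin m n U a' b) + (bilin m n U a' b - bilin m n U a' b')"
    by simp
  also have "bilin m n U a b - bilin m n U a' b = (\<Sum>i<m. (a i - a' i) * mv n U b i)"
    by (simp add: bilin_mv sum_subtractf[symmetric] algebra_simps)
  also have "bilin m n U a' b - bilin m n U a' b' = (\<Sum>j<n. mv m (tr U) a' j * (b j - b' j))"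
    by (simp add: bilin_tr sum_subtractf[symmetric] algebra_simps)
  finally show ?thesis .
qed

lemma lip_consts_D: "L \<in> lip_consts d m u \<Longrightarrow> x \<in> Rn d \<Longrightarrow> y \<in> Rn d \<Longrightarrow>
   enorm m (\<lambda>i. u x i - u y i) \<le> L * ed d x y"
  by (simp add: lip_consts_def ed_def)

lemma lip_consts_nonneg: "L \<in> lip_consts d m u \<Longrightarrow> L \<ge> 0"
  by (simp add: lip_consts_def)

lemma lipon_coord: "L \<in> lip_consts d m u \<Longrightarrow> i < m \<Longrightarrow> lipon d L (\<lambda>x. u x i)"
  unfolding lipon_def
  using lip_consts_nonneg enorm_coord[of i m] lip_consts_D order_trans by blast

lemma lipon_mv: "L \<in> lip_consts d n v \<Longrightarrow> lipon d (L * enorm n (U i)) (\<lambda>x. mv n U (v x) i)"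
  unfolding lipon_def
proof (intro conjI ballI)
  assume L: "L \<in> lip_consts d n v"
  show "0 \<le> L * enorm n (U i)" using lip_consts_nonneg[OF L] enorm_nonneg by simp
  fix x y assume xy: "x \<in> Rn d" "y \<in> Rn d"
  have "\<bar>mv n U (v x) i - mv n U (v y) i\<bar> = \<bar>\<Sum>j<n. U i j * (v x j - v y j)\<bar>"
    unfolding mv_diff by (simp add: mv_def)
  also have "\<dots> \<le> enorm n (U i) * enorm n (\<lambda>j. v x j - v y j)" by (rule enorm_cs)
  also have "\<dots> \<le> enorm n (U i) * (L * ed d x y)"
    by (intro mult_left_mono lip_consts_D[OF L xy] enorm_nonneg)
  finally show "\<bar>mv n U (v x) i - mv n U (v y) i\<bar> \<le> L * enorm n (U i) * ed d x y" by (simp add: algebra_simps)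
qed

lemma lipon_norm_mv: "L \<in> lip_consts d n v \<Longrightarrow> lipon d (L * frob m n U) (\<lambda>x. enorm m (mv n U (v x)))"
  unfolding lipon_def
proof (intro conjI ballI)
  assume L: "L \<in> lip_consts d n v"
  show "0 \<le> L * frob m n U" using lip_consts_nonneg[OF L] frob_nonneg by simp
  fix x y assume xy: "x \<in> Rn d" "y \<in> Rn d"
  have "\<bar>enorm m (mv n U (v x)) - enorm m (mv n U (v y))\<bar> \<le> enorm m (\<lambda>i. mv n U (v x) i - mv n U (v y) i)"
    by (rule enorm_rev)
  also have "\<dots> = enorm m (\<lambda>i. \<Sum>j<n. U i j * (v x j - v y j))"
    unfolding mv_diff by (simp add: mv_def)
  also have "\<dots> \<le> frob m n U * enorm n (\<lambda>j. v x j - v y j)" by (rule enorm_mat)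
  also have "\<dots> \<le> frob m n U * (L * ed d x y)"
    by (intro mult_left_mono lip_consts_D[OF L xy] frob_nonneg)
  finally show "\<bar>enorm m (mv n U (v x)) - enorm m (mv n U (v y))\<bar> \<le> L * frob m n U * ed d x y"
    by (simp add: algebra_simps)
qed

lemma sum_enorm_rows: "(\<Sum>i<m. (enorm n (U i))\<^sup>2) = (frob m n U)\<^sup>2"
  by (simp add: enorm_def frob_def sum_nonneg)

lemma enorm_sq: "(enorm n w)\<^sup>2 = (\<Sum>i<n. (w i)\<^sup>2)"
  by (simp add: enorm_def sum_nonneg)

lemma f_local_lip:
  assumes L1: "c1 \<in> lip_consts d du u" and L2: "c2 \<in> lip_consts d dv v" and xy: "x \<in> Rn d" "y \<in> Rn d"
  shows "\<bar>bilin du dv U (u x) (v x) - bilin du dv U (u y) (v y)\<bar>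
    \<le> ed d x y * (c1 * enorm du (mv dv U (v x)) + c2 * enorm dv (mv du (tr U) (u x))
                 + (c1 * enorm du (mv dv U (v y)) + c2 * enorm dv (mv du (tr U) (u y))))"
proof -
  have c: "c1 \<ge> 0" "c2 \<ge> 0" using L1 L2 by (auto dest: lip_consts_nonneg)
  have "\<bar>bilin du dv U (u x) (v x) - bilin du dv U (u y) (v y)\<bar>
     \<le> \<bar>\<Sum>i<du. (u x i - u y i) * mv dv U (v x) i\<bar> + \<bar>\<Sum>j<dv. mv du (tr U) (u y) j * (v x j - v y j)\<bar>"
    unfolding bilin_diff by (rule abs_triangle_ineq)
  also have "\<dots> \<le> enorm du (\<lambda>i. u x i - u y i) * enorm du (mv dv U (v x))
      + enorm dv (mv du (tr U) (u y)) * enorm dv (\<lambda>j. v x j - v y j)"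
    by (intro add_mono enorm_cs)
  also have "\<dots> \<le> (c1 * ed d x y) * enorm du (mv dv U (v x)) + enorm dv (mv du (tr U) (u y)) * (c2 * ed d x y)"
    by (intro add_mono mult_right_mono mult_left_mono lip_consts_D[OF L1 xy] lip_consts_D[OF L2 xy] enorm_nonneg)
  also have "\<dots> \<le> ed d x y * (c1 * enorm du (mv dv U (v x)) + c2 * enorm dv (mv du (tr U) (u x))
                 + (c1 * enorm du (mv dv U (v y)) + c2 * enorm dv (mv du (tr U) (u y))))"
  proof -
    have "0 \<le> ed d x y * (c2 * enorm dv (mv du (tr U) (u x)) + c1 * enorm du (mv dv U (v y)))"
      using c ed_nonneg enorm_nonneg by (intro mult_nonneg_nonneg add_nonneg_nonneg) auto
    then show ?thesis by (simp add: algebra_simps)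
  qed
  finally show ?thesis .
qed



lemma lipon_mono: "lipon d L \<phi> \<Longrightarrow> L \<le> L' \<Longrightarrow> lipon d L' \<phi>"
  unfolding lipon_def
  by (meson ed_nonneg mult_right_mono order_trans)

lemma mean_le_of_sq:
  fixes X :: "'a \<Rightarrow> real"
  assumes P: "prob_space M" and I: "integrable M X" and I2: "integrable M (\<lambda>x. (X x)\<^sup>2)"
    and E2: "(\<integral>x. (X x)\<^sup>2 \<partial>M) \<le> s\<^sup>2" and s: "s > 0"
  shows "(\<integral>x. X x \<partial>M) \<le> s"
proof -
  interpret prob_space M by (rule P)
  have pt: "X x \<le> ((X x)\<^sup>2 + s\<^sup>2) / (2 * s)" for x
  proof -
    have "0 \<le> (X x - s)\<^sup>2" by simp
    then have "2 * s * X x \<le> (X x)\<^sup>2 + s\<^sup>2" by (simp add: power2_eq_square algebra_simps)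
    then show ?thesis using s by (simp add: field_simps)
  qed
  have "(\<integral>x. X x \<partial>M) \<le> (\<integral>x. ((X x)\<^sup>2 + s\<^sup>2) / (2 * s) \<partial>M)"
    using I I2 pt by (intro integral_mono) auto
  also have "\<dots> = ((\<integral>x. (X x)\<^sup>2 \<partial>M) + s\<^sup>2) / (2 * s)"
    using I2 by (simp add: prob_space)
  also have "\<dots> \<le> (s\<^sup>2 + s\<^sup>2) / (2 * s)" using E2 s by (intro divide_right_mono) auto
  also have "\<dots> = s" using s by (simp add: power2_eq_square)
  finally show ?thesis .
qed



lemma core_tail:
  fixes M :: "(nat \<Rightarrow> real) measure" and u v :: "(nat \<Rightarrow> real) \<Rightarrow> nat \<Rightarrow> real"
  assumes c: "c > 0" and D2: "D2 > 0"
    and VB: "\<forall>M d L \<phi>. prob_space M \<and> space M = Rn d \<and> lip_concentration c d M \<and> lipon d L \<phi>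
     \<and> (\<integral>y. \<phi> y \<partial>M) = 0 \<longrightarrow> integrable M (\<lambda>x. (\<phi> x)\<^sup>2) \<and> (\<integral>x. (\<phi> x)\<^sup>2 \<partial>M) \<le> D2 * L\<^sup>2"
    and P: "prob_space M" and S: "space M = Rn d" and LC: "lip_concentration c d M"
    and c1: "c1 > 0" and c2: "c2 > 0" and Phi: "Phi > 0" "frob du dv U \<le> Phi"
    and L1: "c1 \<in> lip_consts d du u" and L2: "c2 \<in> lip_consts d dv v"
    and Eu: "\<forall>i<du. (\<integral>x. u x i \<partial>M) = 0" and Ev: "\<forall>j<dv. (\<integral>x. v x j \<partial>M) = 0"
    and \<mu>_def: "\<mu> = 2 * sqrt D2"
    and \<rho>_def: "\<rho> = sqrt (4 * ln 8 / c)"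
    and \<sigma>0_def: "\<sigma>0 = (\<mu> + \<rho> + 2 * \<mu> + 4 * \<rho> + 1)\<^sup>2"
    and b_def: "b = c1 * c2 * Phi"
  shows "(\<lambda>x. bilin du dv U (u x) (v x)) \<in> borel_measurable M"
    "\<exists>as. \<forall>k::nat. measure M {x\<in>space M. \<bar>bilin du dv U (u x) (v x) - as\<bar> > real k * (\<sigma>0 * b)}
              \<le> 4 * exp (- c * \<sigma>0 / 16) ^ k"
proof -
  interpret prob_space M by (rule P)
  define f where "f x = bilin du dv U (u x) (v x)" for x
  define N1 where "N1 x = enorm du (mv dv U (v x))" for x
  define N2 where "N2 x = enorm dv (mv du (tr U) (u x))" for x
  define G where "G x = c1 * N1 x + c2 * N2 x" for x
  have b: "b > 0" using c1 c2 Phi by (simp add: b_def)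
  have \<rho>0: "\<rho> > 0" using c by (simp add: \<rho>_def)
  have \<mu>0: "\<mu> > 0" using D2 by (simp add: \<mu>_def)
  have \<rho>sq: "c * \<rho>\<^sup>2 / 4 = ln 8" using c by (simp add: \<rho>_def)
  have quarter: "2 * exp (- c * \<rho>\<^sup>2 / 4) = 1 / 4"
  proof -
    have "exp (- c * \<rho>\<^sup>2 / 4) = exp (- ln 8)" using \<rho>sq by (simp add: minus_divide_left)
    also have "\<dots> = 1 / 8" by (simp add: exp_minus)
    finally show ?thesis by simp
  qed
  have ui_lip: "lipon d c1 (\<lambda>x. u x i)" if "i < du" for i using lipon_coord[OF L1 that] .
  have vj_lip: "lipon d c2 (\<lambda>x. v x j)" if "j < dv" for j using lipon_coord[OF L2 that] .
  have ui_int: "integrable M (\<lambda>x. u x i)" if "i < du" for i using conc(1)[OF P S LC c ui_lip[OF that] c1] .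
  have vj_int: "integrable M (\<lambda>x. v x j)" if "j < dv" for j using conc(1)[OF P S LC c vj_lip[OF that] c2] .
  have fm: "f \<in> borel_measurable M"
  proof -
    have "(\<lambda>x. \<Sum>i<du. \<Sum>j<dv. u x i * U i j * v x j) \<in> borel_measurable M"
      using ui_int vj_int by (intro borel_measurable_sum borel_measurable_times) (auto)
    then show ?thesis unfolding f_def[abs_def] bilin_def .
  qed
  then show "(\<lambda>x. bilin du dv U (u x) (v x)) \<in> borel_measurable M" unfolding f_def[abs_def] .
  have N1_lip: "lipon d (c2 * Phi) N1"
    using lipon_mono[OF lipon_norm_mv[OF L2, of du U]] Phi c2 unfolding N1_def
    by (simp add: mult_left_mono)
  have N2_lip: "lipon d (c1 * Phi) N2"
    using lipon_mono[OF lipon_norm_mv[OF L1, of dv "tr U"]] Phi c1 unfolding N2_def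
    by (simp add: mult_left_mono frob_tr)
  have G_lip: "lipon d (2 * b) G"
    unfolding lipon_def
  proof (intro conjI ballI)
    show "0 \<le> 2 * b" using b by simp
    fix x y assume xy: "x \<in> Rn d" "y \<in> Rn d"
    have "\<bar>G x - G y\<bar> \<le> c1 * \<bar>N1 x - N1 y\<bar> + c2 * \<bar>N2 x - N2 y\<bar>"
    proof -
      have "G x - G y = c1 * (N1 x - N1 y) + c2 * (N2 x - N2 y)" by (simp add: G_def algebra_simps)
      then have "\<bar>G x - G y\<bar> \<le> \<bar>c1 * (N1 x - N1 y)\<bar> + \<bar>c2 * (N2 x - N2 y)\<bar>" by simp
      then show ?thesis using c1 c2 by (simp add: abs_mult)
    qed
    also have "\<dots> \<le> c1 * (c2 * Phi * ed d x y) + c2 * (c1 * Phi * ed d x y)"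
      using N1_lip N2_lip xy c1 c2 unfolding lipon_def by (intro add_mono mult_left_mono) auto
    also have "\<dots> = 2 * b * ed d x y" by (simp add: b_def algebra_simps)
    finally show "\<bar>G x - G y\<bar> \<le> 2 * b * ed d x y" .
  qed
  have N1_int: "integrable M N1" using conc(1)[OF P S LC c N1_lip] c2 Phi by simp
  have N2_int: "integrable M N2" using conc(1)[OF P S LC c N2_lip] c1 Phi by simp
  have G_int: "integrable M G" using conc(1)[OF P S LC c G_lip] b by simp
  have Gm: "G \<in> borel_measurable M" using G_int by auto
  have G0: "G x \<ge> 0" for x using c1 c2 by (simp add: G_def N1_def N2_def enorm_nonneg)
  have EN1: "(\<integral>x. N1 x \<partial>M) \<le> sqrt D2 * c2 * Phi"
  proof -
    define phi where "phi i x = mv dv U (v x) i" for i x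
    have phi_lip: "lipon d (c2 * enorm dv (U i)) (phi i)" for i
      unfolding phi_def using lipon_mv[OF L2] .
    have phi_E: "(\<integral>x. phi i x \<partial>M) = 0" for i
    proof -
      have "(\<integral>x. phi i x \<partial>M) = (\<Sum>j<dv. U i j * (\<integral>x. v x j \<partial>M))"
        unfolding phi_def mv_def using vj_int by (simp add: integral_sum)
      also have "\<dots> = 0" using Ev by simp
      finally show ?thesis .
    qed
    have VBi: "integrable M (\<lambda>x. (phi i x)\<^sup>2) \<and> (\<integral>x. (phi i x)\<^sup>2 \<partial>M) \<le> D2 * (c2 * enorm dv (U i))\<^sup>2" for i
      using VB P S LC phi_lip phi_E by blast
    have sq: "(N1 x)\<^sup>2 = (\<Sum>i<du. (phi i x)\<^sup>2)" for x
      by (simp add: N1_def phi_def enorm_sq)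
    have I2: "integrable M (\<lambda>x. (N1 x)\<^sup>2)" unfolding sq using VBi by auto
    have "(\<integral>x. (N1 x)\<^sup>2 \<partial>M) = (\<Sum>i<du. (\<integral>x. (phi i x)\<^sup>2 \<partial>M))"
      unfolding sq using VBi by (simp add: integral_sum)
    also have "\<dots> \<le> (\<Sum>i<du. D2 * (c2 * enorm dv (U i))\<^sup>2)" using VBi by (intro sum_mono) auto
    also have "\<dots> = D2 * c2\<^sup>2 * (\<Sum>i<du. (enorm dv (U i))\<^sup>2)"
      by (simp add: sum_distrib_left power_mult_distrib mult.assoc)
    also have "\<dots> = D2 * c2\<^sup>2 * (frob du dv U)\<^sup>2" by (simp add: sum_enorm_rows)
    also have "\<dots> \<le> D2 * c2\<^sup>2 * Phi\<^sup>2"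
      using Phi D2 frob_nonneg by (intro mult_left_mono power_mono) auto
    also have "\<dots> = (sqrt D2 * c2 * Phi)\<^sup>2" using D2 by (simp add: power_mult_distrib)
    finally show ?thesis using mean_le_of_sq[OF P N1_int I2] D2 c2 Phi by simp
  qed
  have EN2: "(\<integral>x. N2 x \<partial>M) \<le> sqrt D2 * c1 * Phi"
  proof -
    define phi where "phi i x = mv du (tr U) (u x) i" for i x
    have phi_lip: "lipon d (c1 * enorm du (tr U i)) (phi i)" for i
      unfolding phi_def using lipon_mv[OF L1] .
    have phi_E: "(\<integral>x. phi i x \<partial>M) = 0" for i
    proof -
      have "(\<integral>x. phi i x \<partial>M) = (\<Sum>j<du. tr U i j * (\<integral>x. u x j \<partial>M))"
        unfolding phi_def mv_def using ui_int by (simp add: integral_sum)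
      also have "\<dots> = 0" using Eu by simp
      finally show ?thesis .
    qed
    have VBi: "integrable M (\<lambda>x. (phi i x)\<^sup>2) \<and> (\<integral>x. (phi i x)\<^sup>2 \<partial>M) \<le> D2 * (c1 * enorm du (tr U i))\<^sup>2" for i
      using VB P S LC phi_lip phi_E by blast
    have sq: "(N2 x)\<^sup>2 = (\<Sum>i<dv. (phi i x)\<^sup>2)" for x
      by (simp add: N2_def phi_def enorm_sq)
    have I2: "integrable M (\<lambda>x. (N2 x)\<^sup>2)" unfolding sq using VBi by auto
    have "(\<integral>x. (N2 x)\<^sup>2 \<partial>M) = (\<Sum>i<dv. (\<integral>x. (phi i x)\<^sup>2 \<partial>M))"
      unfolding sq using VBi by (simp add: integral_sum)
    also have "\<dots> \<le> (\<Sum>i<dv. D2 * (c1 * enorm du (tr U i))\<^sup>2)" using VBi by (intro sum_mono) auto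
    also have "\<dots> = D2 * c1\<^sup>2 * (\<Sum>i<dv. (enorm du (tr U i))\<^sup>2)"
      by (simp add: sum_distrib_left power_mult_distrib mult.assoc)
    also have "\<dots> = D2 * c1\<^sup>2 * (frob du dv U)\<^sup>2" by (simp add: sum_enorm_rows frob_tr)
    also have "\<dots> \<le> D2 * c1\<^sup>2 * Phi\<^sup>2"
      using Phi D2 frob_nonneg by (intro mult_left_mono power_mono) auto
    also have "\<dots> = (sqrt D2 * c1 * Phi)\<^sup>2" using D2 by (simp add: power_mult_distrib)
    finally show ?thesis using mean_le_of_sq[OF P N2_int I2] D2 c1 Phi by simp
  qed
  define m where "m = (\<integral>x. G x \<partial>M)"
  have m_le: "m \<le> \<mu> * b"
  proof -
    have "m = c1 * (\<integral>x. N1 x \<partial>M) + c2 * (\<integral>x. N2 x \<partial>M)"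
      unfolding m_def G_def using N1_int N2_int by simp
    also have "\<dots> \<le> c1 * (sqrt D2 * c2 * Phi) + c2 * (sqrt D2 * c1 * Phi)"
      using EN1 EN2 c1 c2 by (intro add_mono mult_left_mono) auto
    also have "\<dots> = \<mu> * b" by (simp add: \<mu>_def b_def algebra_simps)
    finally show ?thesis .
  qed
  have Gtail: "measure M {x\<in>space M. \<bar>G x - m\<bar> > r} \<le> 2 * exp (- c * r\<^sup>2 / (2 * b)\<^sup>2)" if "r > 0" for r
    using conc(2)[OF P S LC c G_lip _ that] b by (simp add: m_def)
  define A where "A a = {y\<in>Rn d. G y \<le> a}" for a
  define F where "F a x = Inf ((\<lambda>y. f y + (2 * a) * ed d x y) ` A a)" for a x
  define a0 where "a0 = (\<mu> + \<rho>) * b"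
  have a00: "a0 > 0" using \<mu>0 \<rho>0 b by (simp add: a0_def)
  have a0m: "a0 - m \<ge> \<rho> * b" using m_le by (simp add: a0_def algebra_simps)
  have ex1: "- c * (\<rho> * b)\<^sup>2 / (2 * b)\<^sup>2 = - c * \<rho>\<^sup>2 / 4" using b by (simp add: power_mult_distrib)
  have PB1: "measure M {x\<in>space M. G x > a0} \<le> 1 / 4"
  proof -
    have "{x\<in>space M. G x > a0} \<subseteq> {x\<in>space M. \<bar>G x - m\<bar> > \<rho> * b}" using a0m by auto
    then have "measure M {x\<in>space M. G x > a0} \<le> measure M {x\<in>space M. \<bar>G x - m\<bar> > \<rho> * b}"
      by (intro finite_measure_mono) (use Gm in measurable)
    also have "\<dots> \<le> 2 * exp (- c * (\<rho> * b)\<^sup>2 / (2 * b)\<^sup>2)" using Gtail \<rho>0 b by simp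
    also have "\<dots> = 1 / 4" unfolding ex1 by (rule quarter)
    finally show ?thesis .
  qed
  have "\<exists>x0\<in>space M. G x0 \<le> a0"
  proof (rule ccontr)
    assume "\<not> ?thesis"
    then have "{x\<in>space M. G x > a0} = space M" by auto
    then show False using PB1 prob_space by simp
  qed
  then obtain x0 where x0: "x0 \<in> space M" "G x0 \<le> a0" by blast
  have Flip: "(\<forall>x\<in>A a. F a x = f x) \<and> lipon d (2 * a) (F a)" if a: "a \<ge> a0" for a
  proof -
    have x0A: "x0 \<in> A a" using x0 a S by (simp add: A_def)
    have La: "2 * a \<ge> 0" using a a00 by simp
    have lipA: "\<forall>x\<in>A a. \<forall>y\<in>A a. \<bar>f x - f y\<bar> \<le> 2 * a * ed d x y"
    proof (intro ballI)
      fix x y assume xy: "x \<in> A a" "y \<in> A a"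
      have "\<bar>f x - f y\<bar> \<le> ed d x y * (G x + G y)"
        using f_local_lip[OF L1 L2, of x y U] xy unfolding f_def G_def N1_def N2_def A_def by simp
      also have "\<dots> \<le> ed d x y * (2 * a)" using xy ed_nonneg by (intro mult_left_mono) (auto simp: A_def)
      finally show "\<bar>f x - f y\<bar> \<le> 2 * a * ed d x y" by (simp add: mult.commute)
    qed
    show ?thesis using mcshane[OF x0A La lipA] unfolding F_def by blast
  qed
  have Fint: "integrable M (F a)" if "a \<ge> a0" for a
    using conc(1)[OF P S LC c conjunct2[OF Flip[OF that]]] that a00 by simp
  have Fm: "F a \<in> borel_measurable M" if "a \<ge> a0" for a using Fint[OF that] by auto
  have Ftail: "measure M {x\<in>space M. \<bar>F a x - (\<integral>y. F a y \<partial>M)\<bar> > t} \<le> 2 * exp (- c * t\<^sup>2 / (2 * a)\<^sup>2)"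
    if "a \<ge> a0" "t > 0" for a t
    using conc(2)[OF P S LC c conjunct2[OF Flip[OF that(1)]] _ that(2)] that a00 by simp
  have PB2: "measure M {x\<in>space M. \<bar>F a x - (\<integral>y. F a y \<partial>M)\<bar> > \<rho> * a} \<le> 1 / 4" if a: "a \<ge> a0" for a
  proof -
    have e: "- c * (\<rho> * a)\<^sup>2 / (2 * a)\<^sup>2 = - c * \<rho>\<^sup>2 / 4" using a a00 by (simp add: power_mult_distrib)
    have "0 < \<rho> * a" using \<rho>0 a a00 by simp
    then show ?thesis using Ftail[OF a, of "\<rho> * a", unfolded e quarter] by simp
  qed
  define as where "as = (\<integral>x. F a0 x \<partial>M)"
  have K: "\<bar>(\<integral>x. F a x \<partial>M) - as\<bar> \<le> 2 * \<rho> * a" if a: "a \<ge> a0" for a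
  proof -
    define B1 where "B1 = {x\<in>space M. G x > a0}"
    define B2 where "B2 = {x\<in>space M. \<bar>F a x - (\<integral>y. F a y \<partial>M)\<bar> > \<rho> * a}"
    define B3 where "B3 = {x\<in>space M. \<bar>F a0 x - (\<integral>y. F a0 y \<partial>M)\<bar> > \<rho> * a0}"
    have s1: "B1 \<in> sets M" unfolding B1_def using Gm by measurable
    have s2: "B2 \<in> sets M" unfolding B2_def using Fm[OF a] by measurable
    have s3: "B3 \<in> sets M" unfolding B3_def using Fm[of a0] by measurable
    have "measure M (B1 \<union> B2 \<union> B3) \<le> measure M (B1 \<union> B2) + measure M B3"
      using s1 s2 s3 by (intro measure_Un_le) auto
    also have "\<dots> \<le> measure M B1 + measure M B2 + measure M B3"
      using s1 s2 measure_Un_le[of B1 M B2] by simp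
    also have "\<dots> \<le> 1/4 + 1/4 + 1/4"
      using PB1 PB2[OF a] PB2[of a0] unfolding B1_def B2_def B3_def by simp
    finally have mU: "measure M (B1 \<union> B2 \<union> B3) < 1" by simp
    have "\<exists>x\<in>space M. x \<notin> B1 \<union> B2 \<union> B3"
    proof (rule ccontr)
      assume "\<not> ?thesis"
      then have "space M \<subseteq> B1 \<union> B2 \<union> B3" by auto
      then have "measure M (space M) \<le> measure M (B1 \<union> B2 \<union> B3)"
        using s1 s2 s3 by (intro finite_measure_mono) auto
      then show False using mU prob_space by simp
    qed
    then obtain x where x: "x \<in> space M" "x \<notin> B1" "x \<notin> B2" "x \<notin> B3" by blast
    have xA0: "x \<in> A a0" using x S by (simp add: A_def B1_def)
    have xA: "x \<in> A a" using x S a by (simp add: A_def B1_def)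
    have eq: "F a x = F a0 x" using Flip[OF a] Flip[of a0] xA xA0 by simp
    have "\<bar>F a x - (\<integral>y. F a y \<partial>M)\<bar> \<le> \<rho> * a" using x by (simp add: B2_def)
    moreover have "\<bar>F a0 x - as\<bar> \<le> \<rho> * a0" using x by (simp add: B3_def as_def)
    moreover have "\<rho> * a0 \<le> \<rho> * a" using a \<rho>0 by simp
    ultimately show ?thesis using eq by linarith
  qed
  have T: "measure M {x\<in>space M. \<bar>f x - as\<bar> > \<sigma> * b} \<le> 4 * exp (- c * \<sigma> / 16)"
    if \<sigma>: "\<sigma> \<ge> \<sigma>0" for \<sigma>
  proof -
    define r where "r = sqrt \<sigma>"
    have "sqrt \<sigma>0 = \<mu> + \<rho> + 2 * \<mu> + 4 * \<rho> + 1" using \<mu>0 \<rho>0 by (simp add: \<sigma>0_def)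
    then have r_ge: "r \<ge> \<mu> + \<rho> + 2 * \<mu> + 4 * \<rho> + 1" unfolding r_def using \<sigma> real_sqrt_le_mono by metis
    have \<sigma>pos: "\<sigma> > 0" using \<sigma> \<mu>0 \<rho>0 unfolding \<sigma>0_def by (smt (verit) zero_less_power)
    have rr: "r * r = \<sigma>" using \<sigma>pos by (simp add: r_def)
    have r0: "r > 0" using r_ge \<mu>0 \<rho>0 by linarith
    define a where "a = r * b"
    have aa0: "a \<ge> a0" unfolding a_def a0_def using r_ge \<mu>0 \<rho>0 b by (intro mult_right_mono) auto
    have am: "m \<le> a / 2"
    proof -
      have "\<mu> * b \<le> (r / 2) * b" using r_ge \<mu>0 \<rho>0 b by (intro mult_right_mono) auto
      then show ?thesis using m_le by (simp add: a_def)
    qed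
    have a4: "4 * \<rho> * a \<le> \<sigma> * b"
    proof -
      have "4 * \<rho> * r \<le> r * r" using r_ge \<mu>0 \<rho>0 r0 by (intro mult_right_mono) auto
      then have "4 * \<rho> * r * b \<le> r * r * b" using b by (simp add: mult_right_mono)
      then show ?thesis using rr by (simp add: a_def mult.assoc)
    qed
    have apos: "a > 0" using r0 b by (simp add: a_def)
    define C1 where "C1 = {x\<in>space M. \<bar>G x - m\<bar> > a / 2}"
    define C2 where "C2 = {x\<in>space M. \<bar>F a x - (\<integral>y. F a y \<partial>M)\<bar> > \<sigma> * b / 2}"
    have sC1: "C1 \<in> sets M" unfolding C1_def using Gm by measurable
    have sC2: "C2 \<in> sets M" unfolding C2_def using Fm[OF aa0] by measurable
    have sub: "{x\<in>space M. \<bar>f x - as\<bar> > \<sigma> * b} \<subseteq> C1 \<union> C2"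
    proof
      fix x assume x: "x \<in> {x\<in>space M. \<bar>f x - as\<bar> > \<sigma> * b}"
      show "x \<in> C1 \<union> C2"
      proof (cases "G x \<le> a")
        case True
        then have "x \<in> A a" using x S by (simp add: A_def)
        then have Fx: "F a x = f x" using Flip[OF aa0] by simp
        have "\<not> \<bar>F a x - (\<integral>y. F a y \<partial>M)\<bar> \<le> \<sigma> * b / 2"
        proof
          assume h: "\<bar>F a x - (\<integral>y. F a y \<partial>M)\<bar> \<le> \<sigma> * b / 2"
          have "\<bar>f x - as\<bar> \<le> \<sigma> * b / 2 + 2 * \<rho> * a" using h K[OF aa0] Fx by linarith
          then show False using x a4 by simp
        qed
        then show ?thesis using x by (simp add: C2_def)
      next
        case False
        then have "\<bar>G x - m\<bar> > a / 2" using am by (simp add: abs_if)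
        then show ?thesis using x by (simp add: C1_def)
      qed
    qed
    have "measure M {x\<in>space M. \<bar>f x - as\<bar> > \<sigma> * b} \<le> measure M (C1 \<union> C2)"
      using sub sC1 sC2 by (intro finite_measure_mono) auto
    also have "\<dots> \<le> measure M C1 + measure M C2" using sC1 sC2 by (rule measure_Un_le)
    also have "measure M C1 \<le> 2 * exp (- c * (a / 2)\<^sup>2 / (2 * b)\<^sup>2)"
      unfolding C1_def using Gtail[of "a / 2"] apos by (simp only: half_gt_zero_iff)
    also have "- c * (a / 2)\<^sup>2 / (2 * b)\<^sup>2 = - c * \<sigma> / 16"
      using b rr by (simp add: a_def power_mult_distrib power2_eq_square field_simps)
    also have "measure M C2 \<le> 2 * exp (- c * (\<sigma> * b / 2)\<^sup>2 / (2 * a)\<^sup>2)"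
      unfolding C2_def using Ftail[OF aa0, of "\<sigma> * b / 2"] \<sigma>pos b by (simp only: half_gt_zero_iff mult_pos_pos)
    also have "- c * (\<sigma> * b / 2)\<^sup>2 / (2 * a)\<^sup>2 = - c * \<sigma> / 16"
      using b rr r0 by (simp add: a_def power_mult_distrib power2_eq_square field_simps flip: rr)
    finally show ?thesis by simp
  qed
  show "\<exists>as. \<forall>k::nat. measure M {x\<in>space M. \<bar>bilin du dv U (u x) (v x) - as\<bar> > real k * (\<sigma>0 * b)}
              \<le> 4 * exp (- c * \<sigma>0 / 16) ^ k"
  proof (intro exI allI)
    fix k :: nat
    show "measure M {x\<in>space M. \<bar>bilin du dv U (u x) (v x) - as\<bar> > real k * (\<sigma>0 * b)}
              \<le> 4 * exp (- c * \<sigma>0 / 16) ^ k"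
    proof (cases "k = 0")
      case True
      then show ?thesis using prob_le_1 by (simp add: order_trans[OF prob_le_1])
    next
      case False
      have s0: "\<sigma>0 \<ge> 0" by (simp add: \<sigma>0_def)
      have "real k * \<sigma>0 \<ge> \<sigma>0" using False s0 by (simp add: mult_le_cancel_right1)
      then have "measure M {x\<in>space M. \<bar>f x - as\<bar> > (real k * \<sigma>0) * b} \<le> 4 * exp (- c * (real k * \<sigma>0) / 16)"
        by (rule T)
      also have "exp (- c * (real k * \<sigma>0) / 16) = exp (- c * \<sigma>0 / 16) ^ k"
        by (simp add: exp_of_nat_mult[symmetric] algebra_simps)
      finally show ?thesis by (simp add: f_def mult.assoc)
    qed
  qed
qed



lemma core_psi:
  fixes c :: real
  assumes c: "c > 0"
  shows "\<exists>C>0. \<forall>(d::nat) (du::nat) (dv::nat) (M::(nat \<Rightarrow> real) measure)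
            (u::(nat \<Rightarrow> real) \<Rightarrow> nat \<Rightarrow> real) (v::(nat \<Rightarrow> real) \<Rightarrow> nat \<Rightarrow> real)
            (U::nat \<Rightarrow> nat \<Rightarrow> real) c1 c2 Phi.
     prob_space M \<and> space M = Rn d \<and> lip_concentration c d M \<and> c1 > 0 \<and> c2 > 0 \<and> Phi > 0 \<and>
     frob du dv U \<le> Phi \<and> c1 \<in> lip_consts d du u \<and> c2 \<in> lip_consts d dv v \<and>
     (\<forall>i<du. (\<integral>x. u x i \<partial>M) = 0) \<and> (\<forall>j<dv. (\<integral>x. v x j \<partial>M) = 0)
     \<longrightarrow> psi1_norm M (\<lambda>x. bilin du dv U (u x) (v x) - (\<integral>y. bilin du dv U (u y) (v y) \<partial>M))
         \<le> ereal (C * (c1 * c2 * Phi))"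
proof -
  obtain D2 where D2: "D2 > 0" and VB: "\<forall>M d L \<phi>. prob_space M \<and> space M = Rn d \<and> lip_concentration c d M \<and> lipon d L \<phi>
     \<and> (\<integral>y. \<phi> y \<partial>M) = 0 \<longrightarrow> integrable M (\<lambda>x. (\<phi> x)\<^sup>2) \<and> (\<integral>x. (\<phi> x)\<^sup>2 \<partial>M) \<le> D2 * L\<^sup>2"
    using var_bound[OF c] by blast
  define \<mu> where "\<mu> = 2 * sqrt D2"
  define \<rho> where "\<rho> = sqrt (4 * ln 8 / c)"
  define \<sigma>0 where "\<sigma>0 = (\<mu> + \<rho> + 2 * \<mu> + 4 * \<rho> + 1)\<^sup>2"
  define q where "q = exp (- c * \<sigma>0 / 16)"
  have \<mu>0: "\<mu> > 0" using D2 by (simp add: \<mu>_def)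
  have \<rho>0: "\<rho> > 0" using c by (simp add: \<rho>_def)
  have \<sigma>00: "\<sigma>0 > 0" using \<mu>0 \<rho>0 unfolding \<sigma>0_def by (smt (verit) zero_less_power)
  have q0: "0 \<le> q" "q < 1" using c \<sigma>00 by (auto simp: q_def)
  obtain b1 where b1: "b1 > 0" "\<forall>l. 0 < l \<and> l < b1 \<longrightarrow> exp l * q < 1 \<and> 4 * (exp l - 1) / (1 - exp l * q) \<le> 1"
    using small_lambda[of 4 q 1] q0 by auto
  obtain b2 where b2: "b2 > 0" "\<forall>l. 0 < l \<and> l < b2 \<longrightarrow> exp l * q < 1 \<and> 4 * (exp l - 1) / (1 - exp l * q) \<le> 1 / 4"
    using small_lambda[of 4 q "1/4"] q0 by auto
  define l1 where "l1 = b1 / 2"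
  have l1: "l1 > 0" "exp l1 * q < 1" "4 * (exp l1 - 1) / (1 - exp l1 * q) \<le> 1"
  proof -
    have "l1 > 0" "l1 < b1" using b1(1) by (auto simp: l1_def)
    then show "l1 > 0" "exp l1 * q < 1" "4 * (exp l1 - 1) / (1 - exp l1 * q) \<le> 1"
      using b1(2)[rule_format, of l1] by auto
  qed
  have ln85: "ln (8 / 5 :: real) > 0" by simp
  define l2 where "l2 = min (b2 / 2) (l1 * ln (8 / 5))"
  have l2pos: "l2 > 0" using b2 l1 ln85 by (simp add: l2_def)
  have l2: "l2 > 0" "exp l2 * q < 1" "4 * (exp l2 - 1) / (1 - exp l2 * q) \<le> 1 / 4"
  proof -
    have "l2 < b2" using b2(1) by (simp add: l2_def min_def)
    then show "l2 > 0" "exp l2 * q < 1" "4 * (exp l2 - 1) / (1 - exp l2 * q) \<le> 1 / 4"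
      using l2pos b2(2)[rule_format, of l2] by auto
  qed
  have l2l1: "l2 / l1 \<le> ln (8 / 5)" using l1 by (simp add: l2_def pos_divide_le_eq min_def mult.commute)
  show ?thesis
  proof (intro exI[of _ "\<sigma>0 / l2"] conjI allI impI)
    show "\<sigma>0 / l2 > 0" using \<sigma>00 l2 by simp
    fix d du dv M u v U c1 c2 Phi
    assume H: "prob_space M \<and> space M = Rn d \<and> lip_concentration c d M \<and> c1 > 0 \<and> c2 > 0 \<and> Phi > 0 \<and>
     frob du dv U \<le> Phi \<and> c1 \<in> lip_consts d du u \<and> c2 \<in> lip_consts d dv v \<and>
     (\<forall>i<du. (\<integral>x. u x i \<partial>M) = 0) \<and> (\<forall>j<dv. (\<integral>x. v x j \<partial>M) = 0)"
    then have P: "prob_space M" and S: "space M = Rn d" and LC: "lip_concentration c d M"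
      and c1: "c1 > 0" and c2: "c2 > 0" and Phi: "Phi > 0" "frob du dv U \<le> Phi"
      and L1: "c1 \<in> lip_consts d du u" and L2: "c2 \<in> lip_consts d dv v"
      and Eu: "\<forall>i<du. (\<integral>x. u x i \<partial>M) = 0" and Ev: "\<forall>j<dv. (\<integral>x. v x j \<partial>M) = 0" by auto
    interpret prob_space M by (rule P)
    define b where "b = c1 * c2 * Phi"
    have b: "b > 0" using c1 c2 Phi by (simp add: b_def)
    define f where "f x = bilin du dv U (u x) (v x)" for x
    note CT = core_tail[OF c D2 VB P S LC c1 c2 Phi L1 L2 Eu Ev \<mu>_def \<rho>_def \<sigma>0_def b_def]
    have fm: "f \<in> borel_measurable M" using CT(1) unfolding f_def[abs_def] .
    obtain as where tail0: "\<forall>k::nat. measure M {x\<in>space M. \<bar>f x - as\<bar> > real k * (\<sigma>0 * b)} \<le> 4 * q ^ k"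
      using CT(2) unfolding f_def q_def by blast
    define h where "h = \<sigma>0 * b"
    have h: "h > 0" using \<sigma>00 b by (simp add: h_def)
    define Y where "Y x = \<bar>f x - as\<bar>" for x
    have Ym: "Y \<in> borel_measurable M" unfolding Y_def[abs_def] using fm by measurable
    have Y0: "\<forall>x\<in>space M. 0 \<le> Y x" by (simp add: Y_def)
    have tail: "\<forall>k::nat. measure M {x\<in>space M. Y x > real k * h} \<le> 4 * q ^ k"
      using tail0 by (simp add: Y_def h_def)
    have "(\<integral>\<^sup>+x. ennreal (exp (l1 * Y x / h)) \<partial>M) \<le> ennreal (1 + 4 * (exp l1 - 1) / (1 - exp l1 * q))"
      by (rule geo_tail[OF P Ym Y0 h q0(1) l1(1) l1(2) tail])
    also have "\<dots> \<le> ennreal 2" using l1(3) by (intro ennreal_leI) auto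
    finally have nn1: "(\<integral>\<^sup>+x. ennreal (exp (l1 * Y x / h)) \<partial>M) \<le> ennreal 2" .
    note em1 = exp_moment[OF P Ym Y0 h l1(1) nn1]
    have EY: "(\<integral>x. Y x \<partial>M) \<le> h / l1" using em1(4) by simp
    have "(\<integral>\<^sup>+x. ennreal (exp (l2 * Y x / h)) \<partial>M) \<le> ennreal (1 + 4 * (exp l2 - 1) / (1 - exp l2 * q))"
      by (rule geo_tail[OF P Ym Y0 h q0(1) l2(1) l2(2) tail])
    also have "\<dots> \<le> ennreal (5 / 4)" using l2(3) by (intro ennreal_leI) auto
    finally have nn2: "(\<integral>\<^sup>+x. ennreal (exp (l2 * Y x / h)) \<partial>M) \<le> ennreal (5 / 4)" .
    have fint: "integrable M f"
    proof -
      have I: "integrable M (\<lambda>x. Y x + \<bar>as\<bar>)" using em1(3) by (rule Bochner_Integration.integrable_add) simp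
      have bd: "norm (f x) \<le> norm (Y x + \<bar>as\<bar>)" for x
        unfolding Y_def real_norm_def by arith
      have "AE x in M. norm (f x) \<le> norm (Y x + \<bar>as\<bar>)" by (rule AE_I2) (rule bd)
      then show ?thesis by (rule Bochner_Integration.integrable_bound[OF I fm])
    qed
    define Ef where "Ef = (\<integral>x. f x \<partial>M)"
    have dev: "\<bar>Ef - as\<bar> \<le> (\<integral>x. Y x \<partial>M)"
    proof -
      have "Ef - as = (\<integral>x. f x - as \<partial>M)" using fint by (simp add: Ef_def prob_space)
      also have "\<bar>\<dots>\<bar> \<le> (\<integral>x. \<bar>f x - as\<bar> \<partial>M)" by (rule integral_abs_bound)
      finally show ?thesis by (simp add: Y_def)
    qed
    define T where "T = h / l2"
    have T: "T > 0" using h l2 by (simp add: T_def)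
    have fac: "exp (l2 * (\<integral>x. Y x \<partial>M) / h) \<le> 8 / 5"
    proof -
      have "l2 * (\<integral>x. Y x \<partial>M) / h \<le> l2 * (h / l1) / h"
        using EY l2 h by (intro divide_right_mono mult_left_mono) auto
      also have "\<dots> = l2 / l1" using h by simp
      also have "\<dots> \<le> ln (8 / 5)" by (rule l2l1)
      finally have "exp (l2 * (\<integral>x. Y x \<partial>M) / h) \<le> exp (ln (8 / 5))" by (simp only: exp_le_cancel_iff)
      also have "exp (ln (8 / 5 :: real)) = 8 / 5" by simp
      finally show ?thesis .
    qed
    have pt: "ennreal (exp (\<bar>f x - Ef\<bar> / T)) \<le> ennreal (8 / 5) * ennreal (exp (l2 * Y x / h))" for x
    proof -
      have "\<bar>f x - Ef\<bar> \<le> Y x + (\<integral>x. Y x \<partial>M)" using dev unfolding Y_def by linarith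
      then have "l2 * \<bar>f x - Ef\<bar> \<le> l2 * (Y x + (\<integral>x. Y x \<partial>M))" using l2(1) by (simp add: mult_left_mono)
      then have "\<bar>f x - Ef\<bar> / T \<le> l2 * (\<integral>x. Y x \<partial>M) / h + l2 * Y x / h"
        using T h l2(1) by (simp add: T_def field_simps)
      then have "exp (\<bar>f x - Ef\<bar> / T) \<le> exp (l2 * (\<integral>x. Y x \<partial>M) / h) * exp (l2 * Y x / h)"
        by (simp add: exp_add[symmetric])
      also have "\<dots> \<le> 8 / 5 * exp (l2 * Y x / h)" using fac by (intro mult_right_mono) auto
      finally show ?thesis by (simp add: ennreal_mult[symmetric])
    qed
    have "(\<integral>\<^sup>+x. ennreal (exp (\<bar>f x - Ef\<bar> / T)) \<partial>M) \<le> (\<integral>\<^sup>+x. ennreal (8 / 5) * ennreal (exp (l2 * Y x / h)) \<partial>M)"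
      by (intro nn_integral_mono pt)
    also have "\<dots> = ennreal (8 / 5) * (\<integral>\<^sup>+x. ennreal (exp (l2 * Y x / h)) \<partial>M)"
      using Ym by (intro nn_integral_cmult) auto
    also have "\<dots> \<le> ennreal (8 / 5) * ennreal (5 / 4)" by (intro mult_left_mono nn2) auto
    also have "\<dots> = 2" by (simp flip: ennreal_mult)
    finally have int2: "(\<integral>\<^sup>+x. ennreal (exp (\<bar>f x - Ef\<bar> / T)) \<partial>M) \<le> 2" .
    have "psi1_norm M (\<lambda>x. f x - Ef) \<le> ereal T"
      unfolding psi1_norm_def using T int2 by (intro Inf_lower) auto
    also have "T = \<sigma>0 / l2 * (c1 * c2 * Phi)" by (simp add: T_def h_def b_def)
    finally show "psi1_norm M (\<lambda>x. bilin du dv U (u x) (v x) - (\<integral>y. bilin du dv U (u y) (v y) \<partial>M))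
         \<le> ereal (\<sigma>0 / l2 * (c1 * c2 * Phi))" by (simp add: f_def Ef_def)
  qed
qed



lemma lipnorm_plus:
  assumes "is_lip n m f" "e > 0"
  shows "lipnorm n m f + e \<in> lip_consts n m f"
proof -
  have ne: "lip_consts n m f \<noteq> {}" using assms(1) by (simp add: is_lip_def)
  have "Inf (lip_consts n m f) < lipnorm n m f + e" using assms(2) by (simp add: lipnorm_def)
  then obtain L where L: "L \<in> lip_consts n m f" "L < lipnorm n m f + e"
    using ne by (meson cInf_lessD)
  show ?thesis unfolding lip_consts_def
  proof (intro CollectI conjI ballI)
    show "0 \<le> lipnorm n m f + e" using L by (simp add: lip_consts_def)
    fix x y assume xy: "x \<in> Rn n" "y \<in> Rn n"
    have "enorm m (\<lambda>i. f x i - f y i) \<le> L * enorm n (\<lambda>i. x i - y i)"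
      using L xy by (simp add: lip_consts_def)
    also have "\<dots> \<le> (lipnorm n m f + e) * enorm n (\<lambda>i. x i - y i)"
      using L enorm_nonneg by (intro mult_right_mono) auto
    finally show "enorm m (\<lambda>i. f x i - f y i) \<le> (lipnorm n m f + e) * enorm n (\<lambda>i. x i - y i)" .
  qed
qed

lemma ereal_le_lim:
  fixes g :: "real \<Rightarrow> real"
  assumes le: "\<forall>e>0. x \<le> ereal (g e)" and lim: "(g \<longlongrightarrow> g0) (at_right 0)"
  shows "x \<le> ereal g0"
proof (cases x)
  case (real r)
  have "eventually (\<lambda>e. r \<le> g e) (at_right (0::real))"
    unfolding eventually_at_right_field using le real by (intro exI[of _ 1]) auto
  then have "r \<le> g0" using lim by (intro tendsto_lowerbound) auto
  then show ?thesis using real by simp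
next
  case PInf
  then show ?thesis using le[rule_format, of 1] by simp
next
  case MInf
  then show ?thesis by simp
qed

theorem lemma5:
  fixes c :: real
  assumes "c > 0"
  shows "\<exists>C>0. \<forall>(d::nat) (du::nat) (dv::nat) (M::(nat \<Rightarrow> real) measure)
            (u::(nat \<Rightarrow> real) \<Rightarrow> nat \<Rightarrow> real) (v::(nat \<Rightarrow> real) \<Rightarrow> nat \<Rightarrow> real)
            (U::nat \<Rightarrow> nat \<Rightarrow> real).
     prob_space M \<and> sets M = sets (PiM {..<d} (\<lambda>_. lborel)) \<and>
     lip_concentration c d M \<and>
     is_lip d du u \<and> is_lip d dv v \<and>
     (\<forall>i<du. (\<integral>x. u x i \<partial>M) = 0) \<and> (\<forall>j<dv. (\<integral>x. v x j \<partial>M) = 0)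
     \<longrightarrow> psi1_norm M (\<lambda>x. bilin du dv U (u x) (v x) - (\<integral>y. bilin du dv U (u y) (v y) \<partial>M))
         \<le> ereal (C * (sqrt ((lipnorm d du u)\<^sup>2 + (lipnorm d dv v)\<^sup>2))\<^sup>2 * frob du dv U)"
proof -
  obtain C where C: "C > 0" and CP: "\<forall>(d::nat) (du::nat) (dv::nat) (M::(nat \<Rightarrow> real) measure)
            (u::(nat \<Rightarrow> real) \<Rightarrow> nat \<Rightarrow> real) (v::(nat \<Rightarrow> real) \<Rightarrow> nat \<Rightarrow> real)
            (U::nat \<Rightarrow> nat \<Rightarrow> real) c1 c2 Phi.
     prob_space M \<and> space M = Rn d \<and> lip_concentration c d M \<and> c1 > 0 \<and> c2 > 0 \<and> Phi > 0 \<and>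
     frob du dv U \<le> Phi \<and> c1 \<in> lip_consts d du u \<and> c2 \<in> lip_consts d dv v \<and>
     (\<forall>i<du. (\<integral>x. u x i \<partial>M) = 0) \<and> (\<forall>j<dv. (\<integral>x. v x j \<partial>M) = 0)
     \<longrightarrow> psi1_norm M (\<lambda>x. bilin du dv U (u x) (v x) - (\<integral>y. bilin du dv U (u y) (v y) \<partial>M))
         \<le> ereal (C * (c1 * c2 * Phi))"
    using core_psi[OF assms] by blast
  show ?thesis
  proof (intro exI[of _ C] conjI allI impI)
    show "C > 0" by (rule C)
    fix d du dv M u v U
    assume H: "prob_space M \<and> sets M = sets (PiM {..<d} (\<lambda>_. lborel)) \<and>
     lip_concentration c d M \<and>
     is_lip d du u \<and> is_lip d dv v \<and>
     (\<forall>i<du. (\<integral>x. u x i \<partial>M) = 0) \<and> (\<forall>j<dv. (\<integral>x. v x j \<partial>M) = 0)"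
    have S: "space M = Rn d"
    proof -
      have "space M = space (PiM {..<d} (\<lambda>_. lborel))" using H by (intro sets_eq_imp_space_eq) auto
      then show ?thesis by (simp add: space_PiM Rn_def)
    qed
    define l1 where "l1 = lipnorm d du u"
    define l2 where "l2 = lipnorm d dv v"
    define F where "F = frob du dv U"
    have l1: "l1 \<ge> 0" using H lipnorm_nonneg by (simp add: l1_def)
    have l2: "l2 \<ge> 0" using H lipnorm_nonneg by (simp add: l2_def)
    have F: "F \<ge> 0" by (simp add: F_def frob_nonneg)
    let ?X = "psi1_norm M (\<lambda>x. bilin du dv U (u x) (v x) - (\<integral>y. bilin du dv U (u y) (v y) \<partial>M))"
    have "\<forall>e>0. ?X \<le> ereal (C * ((l1 + e) * (l2 + e) * (F + e)))"
    proof (intro allI impI)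
      fix e :: real assume e: "e > 0"
      have "l1 + e \<in> lip_consts d du u" using lipnorm_plus[of d du u e] H e by (simp add: l1_def)
      moreover have "l2 + e \<in> lip_consts d dv v" using lipnorm_plus[of d dv v e] H e by (simp add: l2_def)
      ultimately show "?X \<le> ereal (C * ((l1 + e) * (l2 + e) * (F + e)))"
        using CP[THEN spec[where x=d], THEN spec[where x=du], THEN spec[where x=dv], THEN spec[where x=M],
          THEN spec[where x=u], THEN spec[where x=v], THEN spec[where x=U], THEN spec[where x="l1 + e"],
          THEN spec[where x="l2 + e"], THEN spec[where x="F + e"]] H S e l1 l2 F
        by (simp add: F_def)
    qed
    moreover have "((\<lambda>e. C * ((l1 + e) * (l2 + e) * (F + e))) \<longlongrightarrow> C * ((l1 + 0) * (l2 + 0) * (F + 0))) (at_right 0)"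
      by (intro tendsto_intros)
    ultimately have "?X \<le> ereal (C * ((l1 + 0) * (l2 + 0) * (F + 0)))" by (rule ereal_le_lim)
    also have "C * ((l1 + 0) * (l2 + 0) * (F + 0)) \<le> C * (sqrt (l1\<^sup>2 + l2\<^sup>2))\<^sup>2 * F"
    proof -
      have "l1 * l2 \<le> l1\<^sup>2 + l2\<^sup>2"
      proof -
        have "0 \<le> (l1 - l2)\<^sup>2" by simp
        then have "2 * (l1 * l2) \<le> l1\<^sup>2 + l2\<^sup>2" by (simp add: power2_eq_square algebra_simps)
        moreover have "0 \<le> l1 * l2" using l1 l2 by simp
        ultimately show ?thesis by linarith
      qed
      then have "C * F * (l1 * l2) \<le> C * F * (l1\<^sup>2 + l2\<^sup>2)" using C F by (intro mult_left_mono) auto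
      moreover have "(sqrt (l1\<^sup>2 + l2\<^sup>2))\<^sup>2 = l1\<^sup>2 + l2\<^sup>2" by simp
      ultimately show ?thesis by (simp add: algebra_simps)
    qed
    finally show "?X \<le> ereal (C * (sqrt ((lipnorm d du u)\<^sup>2 + (lipnorm d dv v)\<^sup>2))\<^sup>2 * frob du dv U)"
      by (simp add: l1_def l2_def F_def)
  qed
qed

end
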